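(* Let $F:\mathbb{C}\to B(\mathfrak{X})$ be entire and let $\mathcal{H}=\mathcal{H}_F$. Suppose there exist an orthonormal basis $\{u_n\}_{n\ge1}$ of $\mathfrak{X}$, points $\{z_n\}_{n\ge1}\subseteq\mathbb{C}$ and nonzero numbers $\{c_n\}$ with $F(z_n)u=c_n\langle u,u_n\rangle_{\mathfrak{X}}u_n$ for all $u\in\mathfrak{X}$, $n\in\mathbb{N}$ (so every $f\in\mathcal{H}$ satisfies $f(z)=\sum_n\langle f(z_n),u_n\rangle_{\mathfrak{X}}F_n(z)/c_n$ with $F_n=F(\cdot)u_n$). Then the following are equivalent: (a) there exist a scalar entire function $Q$ whose zeros are exactly the points $z_n$, all simple, and an $\mathfrak{X}$-valued entire function $A$ with $A(z)\neq0$ for all $z$ and $\langle A(z_n),u_n\rangle_{\mathfrak{X}}\ne0$ for all $n$, such that every $f\in\mathcal{H}$ satisfies $$f(z)=\sum_{n=1}^\infty\langle f(z_n),u_n\rangle_{\mathfrak{X}}\frac{Q(z)}{(z-z_n)Q'(z_n)}\frac{A(z)}{\langle A(z_n),u_n\rangle_{\mathfrak{X}}},\qquad z\in\mathbb{C};$$ (b) $R_z\mathcal{H}_z\subseteq\mathcal{H}$ for all $z\in\mathbb{C}$.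
   Context: $\mathfrak{X}$ is a complex separable Hilbert space. $\mathcal{H}_F=\{f_u:u\in\mathfrak{X}\}$, $f_u(z)=F(z)u$, with norm $\|f_u\|=\inf\{\|w\|_{\mathfrak{X}}:F(\cdot)w=f_u\}$, a reproducing kernel Hilbert space of entire functions. For $\beta\in\mathbb{C}$, $\mathcal{H}_\beta=\{f\in\mathcal{H}:f(\beta)=0\}$ and for $f\in\mathcal{H}_\beta$, $(R_\beta f)(z)=\frac{f(z)}{z-\beta}$ ($z\ne\beta$), $(R_\beta f)(\beta)=f'(\beta)$. *)

theory Defs
  imports "HOL-Analysis.Analysis"
begin

text \<open>The inner product is linear in
  the first argument and conjugate-linear in the second.\<close>

class complex_vector = real_vector +
  fixes scaleC :: "complex \<Rightarrow> 'a \<Rightarrow> 'a"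
  assumes scaleC_add_right: "scaleC a (x + y) = scaleC a x + scaleC a y"
    and scaleC_add_left: "scaleC (a + b) x = scaleC a x + scaleC b x"
    and scaleC_scaleC: "scaleC a (scaleC b x) = scaleC (a * b) x"
    and scaleC_one: "scaleC 1 x = x"
    and scaleR_scaleC: "scaleR r x = scaleC (complex_of_real r) x"

class complex_inner = complex_vector + real_normed_vector +
  fixes cinner :: "'a \<Rightarrow> 'a \<Rightarrow> complex"
  assumes cinner_commute: "cinner x y = cnj (cinner y x)"
    and cinner_add_left: "cinner (x + y) z = cinner x z + cinner y z"
    and cinner_scaleC_left: "cinner (scaleC r x) y = r * cinner x y"
    and cinner_ge_zero: "0 \<le> Re (cinner x x)"
    and cinner_eq_zero_iff: "cinner x x = 0 \<longleftrightarrow> x = 0"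
    and norm_eq_sqrt_cinner: "norm x = sqrt (Re (cinner x x))"

class chilbert_space = complex_inner + complete_space

definition clinear :: "('a::complex_vector \<Rightarrow> 'b::complex_vector) \<Rightarrow> bool" where
  "clinear T \<longleftrightarrow> (\<forall>x y. T (x + y) = T x + T y) \<and> (\<forall>c x. T (scaleC c x) = scaleC c (T x))"

definition bounded_op :: "('a::complex_inner \<Rightarrow> 'a) \<Rightarrow> bool" where
  "bounded_op T \<longleftrightarrow> clinear T \<and> bounded_linear T"

definition entire_op :: "(complex \<Rightarrow> 'a::complex_inner \<Rightarrow> 'a) \<Rightarrow> bool" where
  "entire_op F \<longleftrightarrow> (\<forall>z. bounded_op (F z)) \<and>
     (\<forall>z. \<exists>D. bounded_op D \<and>
        ((\<lambda>h. onorm (\<lambda>u. F (z + h) u - F z u - scaleC h (D u)) / cmod h) \<longlongrightarrow> 0) (at 0))"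

definition has_cderiv :: "(complex \<Rightarrow> 'a::complex_inner) \<Rightarrow> 'a \<Rightarrow> complex \<Rightarrow> bool" where
  "has_cderiv f D z \<longleftrightarrow> (f has_derivative (\<lambda>h. scaleC h D)) (at z)"

definition entire_vec :: "(complex \<Rightarrow> 'a::complex_inner) \<Rightarrow> bool" where
  "entire_vec f \<longleftrightarrow> (\<forall>z. \<exists>D. has_cderiv f D z)"

definition cderiv :: "(complex \<Rightarrow> 'a::complex_inner) \<Rightarrow> complex \<Rightarrow> 'a" where
  "cderiv f z = (THE D. has_cderiv f D z)"

definition orthonormal_basis :: "(nat \<Rightarrow> 'a::complex_inner) \<Rightarrow> bool" where
  "orthonormal_basis u \<longleftrightarrow>
     (\<forall>m n. cinner (u m) (u n) = (if m = n then 1 else 0)) \<and>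
     (\<forall>x. (\<forall>n. cinner x (u n) = 0) \<longrightarrow> x = 0)"

definition HF :: "(complex \<Rightarrow> 'a \<Rightarrow> 'a) \<Rightarrow> (complex \<Rightarrow> 'a) set" where
  "HF F = {(\<lambda>z. F z u) | u. True}"

definition Hzero :: "(complex \<Rightarrow> 'a::zero) set \<Rightarrow> complex \<Rightarrow> (complex \<Rightarrow> 'a) set" where
  "Hzero H \<beta> = {f \<in> H. f \<beta> = 0}"

definition Rop :: "complex \<Rightarrow> (complex \<Rightarrow> 'a::complex_inner) \<Rightarrow> complex \<Rightarrow> 'a" where
  "Rop \<beta> f z = (if z = \<beta> then cderiv f \<beta> else scaleC (inverse (z - \<beta>)) (f z))"

text \<open>The scalar kernel \<open>Q(z) / ((z - z_n) Q'(z_n))\<close>, with its removable singularity at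
  \<open>z = z_n\<close> filled in by its limit value 1.\<close>
definition lagr :: "(complex \<Rightarrow> complex) \<Rightarrow> complex \<Rightarrow> complex \<Rightarrow> complex" where
  "lagr Q w z = (if z = w then 1 else Q z / ((z - w) * deriv Q w))"

end

theory Submission
  imports Defs "HOL-Complex_Analysis.Complex_Analysis"
begin


context complex_vector begin
lemma scaleC_zero_left [simp]: "scaleC 0 x = 0"
  using scaleC_add_left[of 0 0 x] by simp
lemma scaleC_zero_right [simp]: "scaleC a 0 = 0"
  using scaleC_add_right[of a 0 0] by simp
lemma scaleC_minus_right: "scaleC a (- x) = - scaleC a x"
proof -
  have "scaleC a x + scaleC a (- x) = 0" using scaleC_add_right[of a x "-x"] by simp
  then show ?thesis by (rule minus_unique[THEN sym])
qed
lemma scaleC_diff_right: "scaleC a (x - y) = scaleC a x - scaleC a y"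
  using scaleC_add_right[of a x "-y"] scaleC_minus_right by simp
lemma scaleC_minus_left: "scaleC (- a) x = - scaleC a x"
proof -
  have "scaleC a x + scaleC (- a) x = 0" using scaleC_add_left[of a "-a" x] by simp
  then show ?thesis by (rule minus_unique[THEN sym])
qed
lemma scaleC_diff_left: "scaleC (a - b) x = scaleC a x - scaleC b x"
  using scaleC_add_left[of a "-b" x] scaleC_minus_left by simp
lemma scaleC_sum_right: "scaleC a (sum f A) = sum (\<lambda>i. scaleC a (f i)) A"
  by (induction A rule: infinite_finite_induct) (auto simp: scaleC_add_right)
lemma scaleC_sum_left: "scaleC (sum f A) x = sum (\<lambda>i. scaleC (f i) x) A"
  by (induction A rule: infinite_finite_induct) (auto simp: scaleC_add_left)
lemma scaleC_of_real: "scaleC (complex_of_real r) x = scaleR r x"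
  by (simp add: scaleR_scaleC)
end

lemma cinner_zero_left [simp]: "cinner 0 y = 0"
  using cinner_add_left[of 0 0 y] by simp
lemma cinner_zero_right [simp]: "cinner y 0 = 0"
proof -
  have "cinner y 0 = cnj (cinner 0 y)" by (rule cinner_commute)
  then show ?thesis by simp
qed
lemma cinner_add_right: "cinner x (y + z) = cinner x y + cinner x z"
proof -
  have "cinner x (y+z) = cnj (cinner (y+z) x)" by (rule cinner_commute)
  also have "\<dots> = cnj (cinner y x) + cnj (cinner z x)" by (simp add: cinner_add_left)
  also have "cnj (cinner y x) = cinner x y" by (rule cinner_commute[symmetric])
  also have "cnj (cinner z x) = cinner x z" by (rule cinner_commute[symmetric])
  finally show ?thesis .
qed
lemma cinner_scaleC_right: "cinner x (scaleC r y) = cnj r * cinner x y"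
proof -
  have "cinner x (scaleC r y) = cnj (cinner (scaleC r y) x)" by (rule cinner_commute)
  also have "\<dots> = cnj r * cnj (cinner y x)" by (simp add: cinner_scaleC_left)
  also have "cnj (cinner y x) = cinner x y" by (rule cinner_commute[symmetric])
  finally show ?thesis .
qed
lemma cinner_minus_left: "cinner (- x) y = - cinner x y"
proof -
  have "cinner x y + cinner (- x) y = 0" using cinner_add_left[of x "-x" y] by simp
  then show ?thesis by (rule minus_unique[THEN sym])
qed
lemma cinner_diff_left: "cinner (x - y) z = cinner x z - cinner y z"
  using cinner_add_left[of x "-y" z] cinner_minus_left by simp
lemma cinner_minus_right: "cinner x (- y) = - cinner x y"
proof -
  have "cinner x y + cinner x (- y) = 0" using cinner_add_right[of x y "-y"] by simp
  then show ?thesis by (rule minus_unique[THEN sym])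
qed
lemma cinner_diff_right: "cinner x (y - z) = cinner x y - cinner x z"
  using cinner_add_right[of x y "-z"] cinner_minus_right by simp
lemma cinner_sum_left: "cinner (sum f A) y = (\<Sum>i\<in>A. cinner (f i) y)"
  by (induction A rule: infinite_finite_induct) (auto simp: cinner_add_left)
lemma cinner_sum_right: "cinner y (sum f A) = (\<Sum>i\<in>A. cinner y (f i))"
  by (induction A rule: infinite_finite_induct) (auto simp: cinner_add_right)
lemma cinner_self_real: "cinner x x = complex_of_real ((norm x)\<^sup>2)"
proof -
  have "cinner x x = cnj (cinner x x)" by (rule cinner_commute)
  then have "Im (cinner x x) = 0" by (simp add: complex_eq_iff)
  then show ?thesis using cinner_ge_zero[of x] norm_eq_sqrt_cinner[of x]
    by (simp add: complex_eq_iff)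
qed
lemma norm_scaleC: fixes x :: "'a::complex_inner" shows "norm (scaleC a x) = cmod a * norm x"
proof -
  have "cinner (scaleC a x) (scaleC a x) = a * cnj a * cinner x x"
    by (simp add: cinner_scaleC_left cinner_scaleC_right mult.assoc)
  also have "a * cnj a = complex_of_real ((cmod a)\<^sup>2)" by (rule complex_norm_square[symmetric])
  finally have "complex_of_real ((norm (scaleC a x))\<^sup>2) = complex_of_real (((cmod a)\<^sup>2) * (norm x)\<^sup>2)"
    unfolding cinner_self_real of_real_mult .
  then have "(norm (scaleC a x))\<^sup>2 = ((cmod a)\<^sup>2) * (norm x)\<^sup>2"
    by (simp only: of_real_eq_iff)
  then have "(norm (scaleC a x))\<^sup>2 = (cmod a * norm x)\<^sup>2" by (simp add: power_mult_distrib)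
  then show ?thesis by (simp add: power2_eq_iff_nonneg)
qed
lemma scaleC_eq_0_iff [simp]: fixes x :: "'a::complex_inner" shows "scaleC a x = 0 \<longleftrightarrow> a = 0 \<or> x = 0"
proof
  assume "scaleC a x = 0" then have "cmod a * norm x = 0" using norm_scaleC[of a x] by simp
  then show "a = 0 \<or> x = 0" by simp
qed auto

lemma cauchy_schwarz_c: "cmod (cinner x y) \<le> norm x * norm y"
proof (cases "y = 0")
  case True then show ?thesis by simp
next
  case False
  define N where "N = (norm y)\<^sup>2"
  define a where "a = cinner x y"
  define t where "t = a / complex_of_real N"
  have ny: "N > 0" using False by (simp add: N_def)
  have aa: "a * cnj a = complex_of_real ((cmod a)\<^sup>2)" by (rule complex_norm_square[symmetric])
  have yy: "cinner y y = complex_of_real N" by (simp add: N_def cinner_self_real)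
  have "cinner (x - scaleC t y) (x - scaleC t y) =
        cinner x x - cnj t * cinner x y - (t * cinner y x - t * cnj t * cinner y y)"
    by (simp add: cinner_diff_left cinner_diff_right cinner_scaleC_left cinner_scaleC_right algebra_simps)
  also have "cinner y x = cnj a" unfolding a_def by (rule cinner_commute)
  also have "cnj t * cinner x y = a * cnj a / complex_of_real N"
    by (simp add: t_def a_def[symmetric] mult.commute)
  also have "t * cnj a = a * cnj a / complex_of_real N"
    by (simp add: t_def)
  also have "t * cnj t * cinner y y = a * cnj a / complex_of_real N"
    using ny by (simp add: t_def yy)
  finally have e: "cinner (x - scaleC t y) (x - scaleC t y) =
        cinner x x - a * cnj a / complex_of_real N"
    by simp
  also have "\<dots> = complex_of_real ((norm x)\<^sup>2 - (cmod a)\<^sup>2 / N)"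
    unfolding aa cinner_self_real of_real_diff of_real_divide ..
  finally have e: "cinner (x - scaleC t y) (x - scaleC t y) =
        complex_of_real ((norm x)\<^sup>2 - (cmod a)\<^sup>2 / N)" .
  have "0 \<le> (norm x)\<^sup>2 - (cmod a)\<^sup>2 / N"
    using cinner_ge_zero[of "x - scaleC t y"] e by simp
  then have "(cmod a)\<^sup>2 / N \<le> (norm x)\<^sup>2" by simp
  then have "(cmod a)\<^sup>2 \<le> (norm x)\<^sup>2 * N"
    using ny by (simp add: divide_le_eq)
  then have "(cmod a)\<^sup>2 \<le> (norm x * norm y)\<^sup>2" by (simp add: N_def power_mult_distrib)
  then show ?thesis unfolding a_def by (simp add: abs_le_square_iff)
qed

lemma bl_scaleC_right: "bounded_linear (\<lambda>x::'a::complex_inner. scaleC c x)"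
proof
  show "scaleC c (x + y) = scaleC c x + scaleC c y" for x y :: 'a by (rule scaleC_add_right)
  show "scaleC c (scaleR r x) = scaleR r (scaleC c x)" for r and x :: 'a
    by (simp add: scaleR_scaleC scaleC_scaleC mult.commute)
  show "\<exists>K. \<forall>x::'a. norm (scaleC c x) \<le> norm x * K"
    by (rule exI[of _ "cmod c"]) (simp add: norm_scaleC mult.commute)
qed

lemma bbl_scaleC: "bounded_bilinear (\<lambda>(a::complex) (x::'a::complex_inner). scaleC a x)"
proof
  show "scaleC (a + a') x = scaleC a x + scaleC a' x" for a a' and x :: 'a by (rule scaleC_add_left)
  show "scaleC a (x + x') = scaleC a x + scaleC a x'" for a and x x' :: 'a by (rule scaleC_add_right)
  show "scaleC (scaleR r a) x = scaleR r (scaleC a x)" for r a and x :: 'a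
    by (simp add: scaleR_scaleC scaleC_scaleC scaleR_conv_of_real)
  show "scaleC a (scaleR r x) = scaleR r (scaleC a x)" for r a and x :: 'a
    by (simp add: scaleR_scaleC scaleC_scaleC mult.commute)
  show "\<exists>K. \<forall>a (x::'a). norm (scaleC a x) \<le> norm a * norm x * K"
    by (rule exI[of _ 1]) (simp add: norm_scaleC)
qed

lemma bl_cinner_left: "bounded_linear (\<lambda>x::'a::complex_inner. cinner x y)"
proof
  show "cinner (x + x') y = cinner x y + cinner x' y" for x x' :: 'a by (rule cinner_add_left)
  show "cinner (scaleR r x) y = scaleR r (cinner x y)" for r and x :: 'a
    by (simp add: scaleR_scaleC cinner_scaleC_left scaleR_conv_of_real)
  show "\<exists>K. \<forall>x::'a. norm (cinner x y) \<le> norm x * K"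
    by (rule exI[of _ "norm y"]) (simp add: cauchy_schwarz_c)
qed

lemma bbl_cinner: "bounded_bilinear (\<lambda>x y::'a::complex_inner. cinner x y)"
proof
  show "cinner (x + x') y = cinner x y + cinner x' y" for x x' y :: 'a by (rule cinner_add_left)
  show "cinner x (y + y') = cinner x y + cinner x y'" for x y y' :: 'a by (rule cinner_add_right)
  show "cinner (scaleR r x) y = scaleR r (cinner x y)" for r and x y :: 'a
    by (simp add: scaleR_scaleC cinner_scaleC_left scaleR_conv_of_real)
  show "cinner x (scaleR r y) = scaleR r (cinner x y)" for r and x y :: 'a
    by (simp add: scaleR_scaleC cinner_scaleC_right scaleR_conv_of_real)
  show "\<exists>K. \<forall>x y::'a. norm (cinner x y) \<le> norm x * norm y * K"
    by (rule exI[of _ 1]) (simp add: cauchy_schwarz_c)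
qed




subclass (in chilbert_space) banach ..

lemma mult_cnj_sq: "z * cnj z = (complex_of_real (cmod z))\<^sup>2"
  using complex_norm_square[of z] by simp

lemma onb_inner: "orthonormal_basis u \<Longrightarrow> cinner (u m) (u n) = (if m = n then 1 else 0)"
  by (simp add: orthonormal_basis_def)
lemma onb_nz: "orthonormal_basis u \<Longrightarrow> u n \<noteq> 0"
  using onb_inner[of u n n] by auto
lemma onb_complete: "orthonormal_basis u \<Longrightarrow> (\<And>n. cinner x (u n) = 0) \<Longrightarrow> x = 0"
  by (simp add: orthonormal_basis_def)
lemma onb_determ:
  assumes "orthonormal_basis u" "\<And>n. cinner x (u n) = cinner y (u n)"
  shows "x = y"
proof -
  have "x - y = 0" using assms by (intro onb_complete[OF assms(1)]) (simp add: cinner_diff_left)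
  then show ?thesis by simp
qed

lemma lc_inner:
  assumes "orthonormal_basis u" "finite S"
  shows "cinner (\<Sum>n\<in>S. scaleC (b n) (u n)) (u m) = (if m \<in> S then b m else 0)"
proof -
  have "cinner (\<Sum>n\<in>S. scaleC (b n) (u n)) (u m) = (\<Sum>n\<in>S. b n * (if n = m then 1 else 0))"
    by (simp add: cinner_sum_left cinner_scaleC_left onb_inner[OF assms(1)])
  also have "\<dots> = (\<Sum>n\<in>S. if n = m then b n else 0)" by (intro sum.cong) auto
  also have "\<dots> = (if m \<in> S then b m else 0)" using assms(2) by simp
  finally show ?thesis .
qed

lemma lc_inner_self:
  assumes "orthonormal_basis u" "finite S"
  shows "cinner (\<Sum>n\<in>S. scaleC (b n) (u n)) (\<Sum>n\<in>S. scaleC (b n) (u n))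
         = complex_of_real (\<Sum>n\<in>S. (cmod (b n))\<^sup>2)"
proof -
  have "cinner (\<Sum>n\<in>S. scaleC (b n) (u n)) (\<Sum>n\<in>S. scaleC (b n) (u n))
     = (\<Sum>m\<in>S. cnj (b m) * cinner (\<Sum>n\<in>S. scaleC (b n) (u n)) (u m))"
    by (simp add: cinner_sum_right cinner_scaleC_right)
  also have "\<dots> = (\<Sum>m\<in>S. cnj (b m) * b m)"
    by (intro sum.cong refl) (simp add: lc_inner[OF assms])
  also have "\<dots> = (\<Sum>m\<in>S. complex_of_real ((cmod (b m))\<^sup>2))"
    by (intro sum.cong refl) (simp add: mult_cnj_sq mult.commute)
  finally show ?thesis by simp
qed

lemma lc_norm:
  assumes "orthonormal_basis u" "finite S"
  shows "(norm (\<Sum>n\<in>S. scaleC (b n) (u n)))\<^sup>2 = (\<Sum>n\<in>S. (cmod (b n))\<^sup>2)"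
  using lc_inner_self[OF assms, of b] by (simp only: cinner_self_real of_real_eq_iff)

lemma bessel_finite:
  assumes "orthonormal_basis u" "finite S"
  shows "(\<Sum>n\<in>S. (cmod (cinner x (u n)))\<^sup>2) \<le> (norm x)\<^sup>2"
proof -
  define c where "c n = cinner x (u n)" for n
  define s where "s = (\<Sum>n\<in>S. scaleC (c n) (u n))"
  define P where "P = (\<Sum>n\<in>S. (cmod (c n))\<^sup>2)"
  have sx: "cinner s x = complex_of_real P"
  proof -
    have "cinner s x = (\<Sum>n\<in>S. c n * cinner (u n) x)"
      by (simp add: s_def cinner_sum_left cinner_scaleC_left)
    also have "\<dots> = (\<Sum>n\<in>S. complex_of_real ((cmod (c n))\<^sup>2))"
      by (intro sum.cong refl) (simp add: c_def mult_cnj_sq cinner_commute[of "u _" x])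
    finally show ?thesis by (simp add: P_def)
  qed
  have xs: "cinner x s = complex_of_real P"
  proof -
    have "cinner x s = cnj (cinner s x)" by (rule cinner_commute)
    then show ?thesis using sx by simp
  qed
  have ss: "cinner s s = complex_of_real P"
    unfolding s_def P_def by (rule lc_inner_self[OF assms])
  have "cinner (x - s) (x - s) = cinner x x - cinner x s - (cinner s x - cinner s s)"
    by (simp add: cinner_diff_left cinner_diff_right)
  also have "\<dots> = complex_of_real ((norm x)\<^sup>2 - P)"
    unfolding sx xs ss cinner_self_real[of x] by simp
  finally have "0 \<le> (norm x)\<^sup>2 - P" using cinner_ge_zero[of "x - s"] by simp
  then show ?thesis by (simp add: P_def c_def)
qed

lemma bessel_summable:
  assumes "orthonormal_basis u"
  shows "summable (\<lambda>n. (cmod (cinner x (u n)))\<^sup>2)"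
  by (rule bounded_imp_summable[where B = "(norm x)\<^sup>2"]) (auto intro: bessel_finite[OF assms])

lemma riesz_fischer:
  fixes u :: "nat \<Rightarrow> 'a::chilbert_space"
  assumes onb: "orthonormal_basis u" and sb: "summable (\<lambda>n. (cmod (b n))\<^sup>2)"
  shows "\<exists>v. (\<lambda>n. scaleC (b n) (u n)) sums v \<and> (\<forall>m. cinner v (u m) = b m)"
proof -
  have "summable (\<lambda>n. scaleC (b n) (u n))"
    unfolding summable_Cauchy
  proof (intro allI impI)
    fix e :: real assume e: "e > 0"
    then have "e\<^sup>2 > 0" by simp
    from sb[unfolded summable_Cauchy, rule_format, OF this] obtain N where
      N: "\<And>m n. m \<ge> N \<Longrightarrow> norm (\<Sum>k\<in>{m..<n}. (cmod (b k))\<^sup>2) < e\<^sup>2" by blast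
    show "\<exists>N. \<forall>m\<ge>N. \<forall>n. norm (sum (\<lambda>n. scaleC (b n) (u n)) {m..<n}) < e"
    proof (intro exI allI impI)
      fix m n assume "m \<ge> N"
      then have "(\<Sum>k\<in>{m..<n}. (cmod (b k))\<^sup>2) < e\<^sup>2" using N[of m n]
        by (simp add: sum_nonneg)
      then have "(norm (sum (\<lambda>n. scaleC (b n) (u n)) {m..<n}))\<^sup>2 < e\<^sup>2"
        by (simp add: lc_norm[OF onb])
      then show "norm (sum (\<lambda>n. scaleC (b n) (u n)) {m..<n}) < e"
        using e by (simp add: power_less_imp_less_base)
    qed
  qed
  then obtain v where v: "(\<lambda>n. scaleC (b n) (u n)) sums v" by (auto simp: summable_def)
  have "cinner v (u m) = b m" for m
  proof -
    have "(\<lambda>n. cinner (scaleC (b n) (u n)) (u m)) sums cinner v (u m)"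
      by (rule bounded_linear.sums[OF bl_cinner_left v])
    moreover have "(\<lambda>n. cinner (scaleC (b n) (u n)) (u m)) = (\<lambda>n. if n = m then b n else 0)"
      by (auto simp: cinner_scaleC_left onb_inner[OF onb])
    ultimately show ?thesis using sums_single[of m b] sums_unique2 by metis
  qed
  with v show ?thesis by blast
qed

lemma onb_expansion:
  fixes u :: "nat \<Rightarrow> 'a::chilbert_space"
  assumes onb: "orthonormal_basis u"
  shows "(\<lambda>n. scaleC (cinner x (u n)) (u n)) sums x"
proof -
  obtain v where v: "(\<lambda>n. scaleC (cinner x (u n)) (u n)) sums v" "\<forall>m. cinner v (u m) = cinner x (u m)"
    using riesz_fischer[OF onb bessel_summable[OF onb]] by blast
  have "v = x" using v(2) by (intro onb_determ[OF onb]) auto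
  with v show ?thesis by simp
qed




lemma eop_bl: "entire_op F \<Longrightarrow> bounded_linear (F z)"
  by (simp add: entire_op_def bounded_op_def)
lemma eop_scaleC: "entire_op F \<Longrightarrow> F z (scaleC a x) = scaleC a (F z x)"
  by (simp add: entire_op_def bounded_op_def clinear_def)

lemma eop_deriv:
  fixes F :: "complex \<Rightarrow> 'a::complex_inner \<Rightarrow> 'a"
  assumes "entire_op F"
  shows "\<exists>Dv. ((\<lambda>y. F y v) has_derivative (\<lambda>h. scaleC h Dv)) (at z)"
proof -
  obtain D where D: "bounded_op D"
    and lim: "((\<lambda>h. onorm (\<lambda>u. F (z + h) u - F z u - scaleC h (D u)) / cmod h) \<longlongrightarrow> 0) (at 0)"
    using assms unfolding entire_op_def by blast
  have blD: "bounded_linear D" using D by (simp add: bounded_op_def)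
  have bl: "bounded_linear (\<lambda>u. F (z + h) u - F z u - scaleC h (D u))" for h
    by (intro bounded_linear_sub eop_bl[OF assms] bounded_linear_compose[OF bl_scaleC_right blD])
  have "((\<lambda>y. F y v) has_derivative (\<lambda>h. scaleC h (D v))) (at z)"
    unfolding has_derivative_at
  proof
    show "bounded_linear (\<lambda>h. scaleC h (D v))"
      by (rule bounded_bilinear.bounded_linear_left[OF bbl_scaleC])
    have "((\<lambda>h. onorm (\<lambda>u. F (z + h) u - F z u - scaleC h (D u)) / cmod h * norm v) \<longlongrightarrow> 0 * norm v) (at 0)"
      by (intro tendsto_intros lim)
    then have l2: "((\<lambda>h. onorm (\<lambda>u. F (z + h) u - F z u - scaleC h (D u)) / cmod h * norm v) \<longlongrightarrow> 0) (at 0)"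
      by simp
    show "((\<lambda>h. norm (F (z + h) v - F z v - scaleC h (D v)) / norm h) \<longlongrightarrow> 0) (at 0)"
    proof (rule Lim_null_comparison[OF _ l2])
      show "\<forall>\<^sub>F x in at 0. norm (norm (F (z + x) v - F z v - scaleC x (D v)) / norm x)
               \<le> onorm (\<lambda>u. F (z + x) u - F z u - scaleC x (D u)) / cmod x * norm v"
      proof (intro always_eventually allI)
        fix h :: complex
        have "norm (F (z + h) v - F z v - scaleC h (D v)) \<le> onorm (\<lambda>u. F (z + h) u - F z u - scaleC h (D u)) * norm v"
          using onorm[OF bl[of h], of v] by simp
        then show "norm (norm (F (z + h) v - F z v - scaleC h (D v)) / norm h)
               \<le> onorm (\<lambda>u. F (z + h) u - F z u - scaleC h (D u)) / cmod h * norm v"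
          by (simp add: divide_right_mono field_simps)
      qed
    qed
  qed
  then show ?thesis by blast
qed

lemma eop_cont:
  fixes F :: "complex \<Rightarrow> 'a::complex_inner \<Rightarrow> 'a"
  assumes "entire_op F"
  shows "isCont (\<lambda>y. F y v) z"
  using eop_deriv[OF assms, of v z] has_derivative_continuous by blast

lemma eop_sums:
  fixes F :: "complex \<Rightarrow> 'a::chilbert_space \<Rightarrow> 'a"
  assumes "entire_op F" "orthonormal_basis u"
  shows "(\<lambda>n. scaleC (cinner v (u n)) (F z (u n))) sums F z v"
proof -
  have "(\<lambda>n. F z (scaleC (cinner v (u n)) (u n))) sums F z v"
    by (rule bounded_linear.sums[OF eop_bl[OF assms(1)] onb_expansion[OF assms(2)]])
  then show ?thesis by (simp add: eop_scaleC[OF assms(1)])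
qed

lemma eop_scalar_holo:
  fixes F :: "complex \<Rightarrow> 'a::complex_inner \<Rightarrow> 'a"
  assumes "entire_op F"
  shows "(\<lambda>y. cinner (F y v) w) holomorphic_on S"
proof -
  have "(\<lambda>y. cinner (F y v) w) field_differentiable (at z)" for z
  proof -
    obtain Dv where Dv: "((\<lambda>y. F y v) has_derivative (\<lambda>h. scaleC h Dv)) (at z)"
      using eop_deriv[OF assms] by blast
    have "((\<lambda>y. cinner (F y v) w) has_derivative (\<lambda>h. cinner (scaleC h Dv) w)) (at z)"
      by (rule bounded_linear.has_derivative[OF bl_cinner_left Dv])
    then have "((\<lambda>y. cinner (F y v) w) has_field_derivative (cinner Dv w)) (at z)"
      unfolding has_field_derivative_def
      by (rule has_derivative_eq_rhs) (simp add: fun_eq_iff cinner_scaleC_left mult.commute)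
    then show ?thesis unfolding field_differentiable_def by blast
  qed
  then show ?thesis unfolding holomorphic_on_def
    using field_differentiable_at_within by blast
qed

lemma cderiv_eq:
  fixes f :: "complex \<Rightarrow> 'a::complex_inner"
  assumes "has_cderiv f D z"
  shows "cderiv f z = D"
proof -
  have "\<And>D'. has_cderiv f D' z \<Longrightarrow> D' = D"
  proof -
    fix D' assume "has_cderiv f D' z"
    then have "(\<lambda>h. scaleC h D') = (\<lambda>h. scaleC h D)"
      using assms unfolding has_cderiv_def by (rule has_derivative_unique)
    then have "scaleC 1 D' = scaleC 1 D" by metis
    then show "D' = D" by (simp add: scaleC_one)
  qed
  then show ?thesis unfolding cderiv_def using assms by blast
qed

lemma cderiv_mult_vanish:
  fixes h :: "complex \<Rightarrow> 'a::complex_inner"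
  assumes "isCont h b"
  shows "has_cderiv (\<lambda>z. scaleC (z - b) (h z)) (h b) b"
  unfolding has_cderiv_def has_derivative_at
proof
  show "bounded_linear (\<lambda>t. scaleC t (h b))"
    by (rule bounded_bilinear.bounded_linear_left[OF bbl_scaleC])
  have "((\<lambda>t. h (b + t)) \<longlongrightarrow> h b) (at 0)"
    using assms by (simp add: isCont_def LIM_offset_zero)
  then have L: "((\<lambda>t. norm (h (b + t) - h b)) \<longlongrightarrow> 0) (at 0)"
    by (simp add: tendsto_norm_zero_iff LIM_zero)
  have E:  "norm (h (b + t) - h b) = norm (scaleC (b + t - b) (h (b + t)) - scaleC (b - b) (h b) - scaleC t (h b)) / norm t"
    if "t \<noteq> 0" for t
    using that by (simp add: scaleC_diff_right[symmetric] norm_scaleC)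
  show "((\<lambda>t. norm (scaleC (b + t - b) (h (b + t)) - scaleC (b - b) (h b) - scaleC t (h b)) / norm t) \<longlongrightarrow> 0) (at 0)"
    by (rule Lim_transform_eventually[OF L]) (use E in \<open>auto simp: eventually_at_filter\<close>)
qed




lemma scal_extract:
  fixes y :: "'a::complex_inner"
  assumes "y \<noteq> 0" "(\<lambda>n. scaleC (\<alpha> n) y) sums s"
  shows "\<exists>\<sigma>. \<alpha> sums \<sigma> \<and> s = scaleC \<sigma> y"
proof -
  have "(\<lambda>n. cinner (scaleC (\<alpha> n) y) y) sums cinner s y"
    by (rule bounded_linear.sums[OF bl_cinner_left assms(2)])
  then have "(\<lambda>n. \<alpha> n * cinner y y) sums cinner s y" by (simp add: cinner_scaleC_left)
  then have "(\<lambda>n. \<alpha> n * cinner y y / cinner y y) sums (cinner s y / cinner y y)"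
    by (rule sums_divide)
  moreover have "cinner y y \<noteq> 0" using assms(1) cinner_eq_zero_iff by blast
  ultimately have a: "\<alpha> sums (cinner s y / cinner y y)" by simp
  have "(\<lambda>n. scaleC (\<alpha> n) y) sums scaleC (cinner s y / cinner y y) y"
    by (rule bounded_linear.sums[OF bounded_bilinear.bounded_linear_left[OF bbl_scaleC] a])
  with assms(2) have "s = scaleC (cinner s y / cinner y y) y" by (rule sums_unique2)
  with a show ?thesis by blast
qed

lemma holo_isolated:
  fixes Q :: "complex \<Rightarrow> complex"
  assumes "Q holomorphic_on UNIV" "Q w \<noteq> 0"
  shows "\<exists>r>0. \<forall>z\<in>ball b r - {b}. Q z \<noteq> 0"
proof (cases "Q b = 0")
  case True
  then obtain r where "0 < r" "\<And>z. z \<in> ball b r - {b} \<Longrightarrow> Q z \<noteq> 0"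
    using isolated_zeros[OF assms(1) open_UNIV connected_UNIV, of b w] assms(2) by auto
  then show ?thesis by blast
next
  case False
  have "continuous_on UNIV Q" using assms(1) holomorphic_on_imp_continuous_on by blast
  then have "isCont Q b" by (metis UNIV_I continuous_on_eq_continuous_at open_UNIV)
  then have "eventually (\<lambda>z. Q z \<noteq> 0) (at b)"
    using False unfolding isCont_def by (rule tendsto_imp_eventually_ne)
  then obtain r where "r > 0" "\<forall>z. z \<noteq> b \<and> dist z b < r \<longrightarrow> Q z \<noteq> 0"
    unfolding eventually_at by auto
  then show ?thesis by (auto simp: dist_commute)
qed

lemma pf_identity0:
  fixes A B d cv q :: complex
  assumes "A \<noteq> 0" "B \<noteq> 0" "d \<noteq> 0"
  shows "(A + B) * (cv / A * (q / (B * d))) = cv * (q / (B * d)) + q * (cv / (A * d))"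
  using assms by (simp add: field_simps)

lemma pf_identity:
  fixes a z b d cv q :: complex
  assumes "a \<noteq> b" "z \<noteq> a" "z \<noteq> b" "d \<noteq> 0"
  shows "(z - b) * (cv / (a - b) * (q / ((z - a) * d))) = cv * (q / ((z - a) * d)) + q * (cv / ((a - b) * d))"
proof -
  have "z - b = (a - b) + (z - a)" by simp
  then show ?thesis using pf_identity0[of "a - b" "z - a" d cv q] assms by simp
qed

locale setting =
  fixes F :: "complex \<Rightarrow> 'x::chilbert_space \<Rightarrow> 'x"
    and u :: "nat \<Rightarrow> 'x" and zs :: "nat \<Rightarrow> complex" and c :: "nat \<Rightarrow> complex"
  assumes eop: "entire_op F"
    and onb: "orthonormal_basis u"
    and cnz: "\<forall>n. c n \<noteq> 0"
    and Fz: "\<forall>n v. F (zs n) v = scaleC (c n * cinner v (u n)) (u n)"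
begin

lemma Fzu: "F (zs n) (u m) = (if n = m then scaleC (c n) (u n) else 0)"
  using Fz onb_inner[OF onb, of m n] by auto

lemma sample: "cinner (F (zs n) v) (u n) = c n * cinner v (u n)"
  using Fz onb_inner[OF onb, of n n] by (simp add: cinner_scaleC_left)

lemma zs_inj: "zs n = zs m \<Longrightarrow> n = m"
proof (rule ccontr)
  assume "zs n = zs m" "n \<noteq> m"
  then have "F (zs n) (u n) = F (zs m) (u n)" by simp
  then show False using \<open>n \<noteq> m\<close> Fzu[of n n] Fzu[of m n] cnz onb_nz[OF onb, of n] by auto
qed

lemma Fz_zero_coef: "F (zs n) v = 0 \<Longrightarrow> cinner v (u n) = 0"
  using Fz cnz onb_nz[OF onb, of n] by auto

lemma F_diff: "F z (x - y) = F z x - F z y"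
  using eop_bl[OF eop] by (simp add: linear_simps)

lemma lagr_zs: "lagr Q (zs n) (zs m) = (if n = m then 1 else 0)" if "Q (zs m) = 0"
  using that zs_inj by (auto simp: lagr_def)

lemma lagr_nz: "Q z \<noteq> 0 \<Longrightarrow> Q (zs n) = 0 \<Longrightarrow> lagr Q (zs n) z = Q z / ((z - zs n) * deriv Q (zs n))"
  by (auto simp: lagr_def)

lemma a_imp_b:
  fixes Q :: "complex \<Rightarrow> complex" and A :: "complex \<Rightarrow> 'x"
  assumes hQ: "Q holomorphic_on UNIV" and zQ: "{z. Q z = 0} = range zs"
    and dQ: "\<forall>n. deriv Q (zs n) \<noteq> 0"
    and Anz: "\<forall>z. A z \<noteq> 0" and Knz: "\<forall>n. cinner (A (zs n)) (u n) \<noteq> 0"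
    and ex: "\<forall>f \<in> HF F. \<forall>z.
               (\<lambda>n. scaleC (cinner (f (zs n)) (u n) * lagr Q (zs n) z / cinner (A (zs n)) (u n)) (A z))
                 sums f z"
  shows "\<forall>\<beta>. \<forall>f \<in> Hzero (HF F) \<beta>. Rop \<beta> f \<in> HF F"
proof (intro allI ballI)
  fix \<beta> f assume "f \<in> Hzero (HF F) \<beta>"
  then obtain v where fv: "f = (\<lambda>z. F z v)" and fb: "F \<beta> v = 0"
    by (auto simp: Hzero_def HF_def)
  define K where "K n = cinner (A (zs n)) (u n)" for n
  define coef where "coef x n = c n * cinner x (u n) / K n" for x n
  have Qzs: "Q (zs n) = 0" for n using zQ by auto
  have Qnz: "Q z \<noteq> 0 \<longleftrightarrow> z \<notin> range zs" for z using zQ by auto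
  have ex': "(\<lambda>n. scaleC (coef x n * lagr Q (zs n) z) (A z)) sums F z x" for x z
  proof -
    have "(\<lambda>z. F z x) \<in> HF F" by (auto simp: HF_def)
    from ex[rule_format, OF this, of z] show ?thesis
      by (simp add: sample coef_def K_def)
  qed
  have "\<forall>x. \<forall>z. \<exists>s. (\<lambda>n. coef x n * lagr Q (zs n) z) sums s \<and> F z x = scaleC s (A z)"
    using scal_extract[OF _ ex'] Anz by blast
  then obtain \<phi> where phi: "\<And>x z. (\<lambda>n. coef x n * lagr Q (zs n) z) sums \<phi> x z"
      "\<And>x z. F z x = scaleC (\<phi> x z) (A z)"
    by metis
  have phi_zs: "\<phi> x (zs m) = coef x m" for x m
  proof -
    have "(\<lambda>n. coef x n * lagr Q (zs n) (zs m)) = (\<lambda>n. if n = m then coef x n else 0)"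
      by (auto simp: lagr_zs[of Q, OF Qzs])
    then show ?thesis using phi(1)[of x "zs m"] sums_single[of m "coef x"] sums_unique2 by metis
  qed
  have coef0: "coef v n = 0" if "zs n = \<beta>" for n
    using Fz_zero_coef[of n v] fb that by (simp add: coef_def)
  have "Q \<noteq> (\<lambda>_. 0)" using dQ by auto
  then obtain w0 where "Q w0 \<noteq> 0" by auto
  then obtain r where r: "r > 0" "\<forall>z\<in>ball \<beta> r - {\<beta>}. Q z \<noteq> 0"
    using holo_isolated[OF hQ] by blast
  have rdist: "r \<le> cmod (zs n - \<beta>)" if "zs n \<noteq> \<beta>" for n
  proof (rule ccontr)
    assume "\<not> r \<le> cmod (zs n - \<beta>)"
    then have "zs n \<in> ball \<beta> r - {\<beta>}" using that by (auto simp: dist_norm norm_minus_commute)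
    then show False using r(2) Qzs by blast
  qed
  define b where "b n = cinner v (u n) / (zs n - \<beta>)" for n
  have bb: "(cmod (b n))\<^sup>2 \<le> (1 / r\<^sup>2) * (cmod (cinner v (u n)))\<^sup>2" for n
  proof (cases "zs n = \<beta>")
    case True then show ?thesis by (simp add: b_def)
  next
    case False
    then have "r \<le> cmod (zs n - \<beta>)" by (rule rdist)
    then have "cmod (b n) \<le> cmod (cinner v (u n)) / r"
      using r(1) False by (simp add: b_def norm_divide divide_left_mono)
    then have "(cmod (b n))\<^sup>2 \<le> (cmod (cinner v (u n)) / r)\<^sup>2"
      by (simp add: power_mono)
    then show ?thesis by (simp add: power_divide)
  qed
  have "summable (\<lambda>n. (cmod (b n))\<^sup>2)"
  proof (rule summable_comparison_test'[OF summable_mult[OF bessel_summable[OF onb, of v], of "1 / r\<^sup>2"], of 0])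
    fix n show "norm ((cmod (b n))\<^sup>2) \<le> 1 / r\<^sup>2 * (cmod (cinner v (u n)))\<^sup>2"
      using bb[of n] by simp
  qed
  then obtain u1 where u1: "\<forall>m. cinner u1 (u m) = b m"
    using riesz_fischer[OF onb] by blast
  have coef_u1: "coef u1 n = coef v n / (zs n - \<beta>)" for n
    using u1 by (simp add: coef_def b_def)
  define \<tau> where "\<tau> n = coef v n / ((zs n - \<beta>) * deriv Q (zs n))" for n
  have key: "(z - \<beta>) * (coef u1 n * lagr Q (zs n) z) = coef v n * lagr Q (zs n) z + Q z * \<tau> n"
    if "Q z \<noteq> 0" "z \<noteq> \<beta>" for z n
  proof (cases "zs n = \<beta>")
    case True then show ?thesis by (simp add: coef_u1 coef0 \<tau>_def)
  next
    case False
    have zn: "z \<noteq> zs n" using that Qzs by auto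
    have L: "lagr Q (zs n) z = Q z / ((z - zs n) * deriv Q (zs n))" by (rule lagr_nz[OF that(1) Qzs])
    have "zs n - \<beta> \<noteq> 0" "z - zs n \<noteq> 0" "z - \<beta> \<noteq> 0" "deriv Q (zs n) \<noteq> 0"
      using False zn that dQ by auto
    show ?thesis unfolding L coef_u1 \<tau>_def
      by (rule pf_identity) (use False zn that dQ in auto)
  qed
  have ser: "(\<lambda>n. Q z * \<tau> n) sums ((z - \<beta>) * \<phi> u1 z - \<phi> v z)" if "Q z \<noteq> 0" "z \<noteq> \<beta>" for z
  proof -
    have "(\<lambda>n. (z - \<beta>) * (coef u1 n * lagr Q (zs n) z) - coef v n * lagr Q (zs n) z) sums ((z - \<beta>) * \<phi> u1 z - \<phi> v z)"
      by (intro sums_diff sums_mult phi(1))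
    then show ?thesis using key[OF that] by simp
  qed
  define z0 where "z0 = \<beta> + complex_of_real (r / 2)"
  have z0: "Q z0 \<noteq> 0" "z0 \<noteq> \<beta>"
    using r by (auto simp: z0_def intro!: r(2)[rule_format] simp: dist_norm)
  define T where "T = ((z0 - \<beta>) * \<phi> u1 z0 - \<phi> v z0) / Q z0"
  have tauT: "\<tau> sums T"
  proof -
    have "(\<lambda>n. Q z0 * \<tau> n / Q z0) sums (((z0 - \<beta>) * \<phi> u1 z0 - \<phi> v z0) / Q z0)"
      by (rule sums_divide[OF ser[OF z0]])
    then show ?thesis using z0 by (simp add: T_def)
  qed
  have main: "\<phi> u1 z * (z - \<beta>) = \<phi> v z + Q z * T" if "z \<noteq> \<beta>" for z
  proof (cases "Q z = 0")
    case True
    then obtain m where m: "z = zs m" using Qnz by auto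
    then have "zs m \<noteq> \<beta>" using that by simp
    then show ?thesis using True by (simp add: m phi_zs coef_u1)
  next
    case False
    have "(\<lambda>n. Q z * \<tau> n) sums (Q z * T)" by (rule sums_mult[OF tauT])
    with ser[OF False that] have "(z - \<beta>) * \<phi> u1 z - \<phi> v z = Q z * T" by (rule sums_unique2)
    then show ?thesis by (simp add: algebra_simps)
  qed
  have "\<exists>w. \<forall>z. z \<noteq> \<beta> \<longrightarrow> F z w = scaleC (\<phi> u1 z - T * Q z / (z - \<beta>)) (A z)"
  proof (cases "\<beta> \<in> range zs")
    case False
    then have Qb: "Q \<beta> \<noteq> 0" using Qnz by simp
    have "coef v n * lagr Q (zs n) \<beta> = - Q \<beta> * \<tau> n" for n
    proof -
      have "\<beta> \<noteq> zs n" using False by auto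
      then show ?thesis using lagr_nz[OF Qb Qzs, of n] dQ
        by (simp add: \<tau>_def field_simps)
    qed
    then have "(\<lambda>n. - Q \<beta> * \<tau> n) sums \<phi> v \<beta>" using phi(1)[of v \<beta>] by simp
    moreover have "(\<lambda>n. - Q \<beta> * \<tau> n) sums (- Q \<beta> * T)" by (rule sums_mult[OF tauT])
    ultimately have "\<phi> v \<beta> = - Q \<beta> * T" by (rule sums_unique2)
    moreover have "\<phi> v \<beta> = 0" using phi(2)[of \<beta> v] fb Anz by simp
    ultimately have "T = 0" using Qb by simp
    then show ?thesis using phi(2) by auto
  next
    case True
    then obtain k where k: "\<beta> = zs k" by auto
    define \<kappa> where "\<kappa> = T * K k * deriv Q \<beta> / c k"
    define w where "w = u1 - scaleC \<kappa> (u k)"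
    have coefk: "coef (u k) n = (if n = k then c k / K k else 0)" for n
      using onb_inner[OF onb, of k n] by (auto simp: coef_def)
    have phik: "\<phi> (u k) z = c k / K k * lagr Q \<beta> z" for z
    proof -
      have "(\<lambda>n. coef (u k) n * lagr Q (zs n) z) = (\<lambda>n. if n = k then c k / K k * lagr Q \<beta> z else 0)"
        by (auto simp: coefk k)
      then show ?thesis using phi(1)[of "u k" z] sums_single[of k "\<lambda>_. c k / K k * lagr Q \<beta> z"] sums_unique2
        by metis
    qed
    have "F z w = scaleC (\<phi> u1 z - T * Q z / (z - \<beta>)) (A z)" if "z \<noteq> \<beta>" for z
    proof -
      have "F z w = F z u1 - scaleC \<kappa> (F z (u k))"
        by (simp add: w_def F_diff eop_scaleC[OF eop])
      also have "\<dots> = scaleC (\<phi> u1 z) (A z) - scaleC (\<kappa> * \<phi> (u k) z) (A z)"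
        by (simp add: phi(2)[of z] scaleC_scaleC)
      also have "\<kappa> * \<phi> (u k) z = T * Q z / (z - \<beta>)"
      proof -
        have "lagr Q \<beta> z = Q z / ((z - \<beta>) * deriv Q \<beta>)" using that by (simp add: lagr_def)
        then show ?thesis using cnz Knz dQ k that
          by (simp add: phik \<kappa>_def K_def field_simps)
      qed
      finally show ?thesis by (simp add: scaleC_diff_left)
    qed
    then show ?thesis by blast
  qed
  then obtain w where w: "\<And>z. z \<noteq> \<beta> \<Longrightarrow> F z w = scaleC (\<phi> u1 z - T * Q z / (z - \<beta>)) (A z)"
    by blast
  have off: "Rop \<beta> f z = F z w" if "z \<noteq> \<beta>" for z
  proof -
    have "Rop \<beta> f z = scaleC (inverse (z - \<beta>) * \<phi> v z) (A z)"
      using that by (simp add: Rop_def fv phi(2)[of z v] scaleC_scaleC)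
    also have "inverse (z - \<beta>) * \<phi> v z = \<phi> u1 z - T * Q z / (z - \<beta>)"
      using main[OF that] that by (simp add: field_simps)
    finally show ?thesis using w[OF that] by simp
  qed
  have feq: "f = (\<lambda>z. scaleC (z - \<beta>) (F z w))"
  proof
    fix z show "f z = scaleC (z - \<beta>) (F z w)"
    proof (cases "z = \<beta>")
      case True then show ?thesis by (simp add: fv fb)
    next
      case False
      have "scaleC (z - \<beta>) (F z w) = scaleC (z - \<beta>) (scaleC (inverse (z - \<beta>)) (f z))"
        using off[OF False] False by (simp add: Rop_def)
      also have "\<dots> = f z" using False by (simp add: scaleC_scaleC scaleC_one)
      finally show ?thesis by simp
    qed
  qed
  have "has_cderiv f (F \<beta> w) \<beta>"
    unfolding feq by (rule cderiv_mult_vanish[OF eop_cont[OF eop]])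
  then have Rb: "Rop \<beta> f \<beta> = F \<beta> w" by (simp add: Rop_def cderiv_eq)
  have "Rop \<beta> f = (\<lambda>z. F z w)"
  proof
    fix z show "Rop \<beta> f z = F z w" by (cases "z = \<beta>") (use off Rb in auto)
  qed
  then show "Rop \<beta> f \<in> HF F" by (auto simp: HF_def)
qed

end



lemma vanish_pt:
  fixes h :: "complex \<Rightarrow> 'a::real_normed_vector"
  assumes "isCont h p" "\<And>z. z \<noteq> p \<Longrightarrow> z \<noteq> q \<Longrightarrow> h z = 0"
  shows "h p = 0"
proof -
  define d where "d = (if q = p then 1 else dist q p)"
  have "d > 0" by (simp add: d_def)
  have "eventually (\<lambda>z. h z = 0) (at p)"
    unfolding eventually_at
    by (rule exI[of _ d]) (use \<open>d > 0\<close> assms(2) in \<open>auto simp: d_def split: if_splits\<close>)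
  then have "h \<midarrow>p\<rightarrow> 0" by (rule tendsto_eventually)
  moreover have "h \<midarrow>p\<rightarrow> h p" using assms(1) by (simp add: isCont_def)
  ultimately show ?thesis using LIM_unique by blast
qed

lemma scaleC_cancel_right:
  fixes x :: "'a::complex_inner"
  assumes "scaleC a x = scaleC b x" "x \<noteq> 0"
  shows "a = b"
proof -
  have "scaleC (a - b) x = 0" using assms(1) by (simp add: scaleC_diff_left)
  then show ?thesis using assms(2) by simp
qed

lemma loc_deriv:
  fixes F :: "complex \<Rightarrow> 'a::complex_inner \<Rightarrow> 'a" and A :: "complex \<Rightarrow> 'a"
  assumes eop: "entire_op F" and S: "open S" "p \<in> S" and \<phi>: "\<phi> holomorphic_on S"
    and eq: "\<And>z. z \<in> S \<Longrightarrow> A z = scaleC (\<phi> z) (F z v)"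
  shows "\<exists>D. has_cderiv A D p"
proof -
  obtain \<phi>' where d\<phi>: "(\<phi> has_field_derivative \<phi>') (at p)"
    using holomorphic_on_imp_differentiable_at[OF \<phi> S] field_differentiable_def by blast
  obtain Dv where dF: "((\<lambda>y. F y v) has_derivative (\<lambda>h. scaleC h Dv)) (at p)"
    using eop_deriv[OF eop] by blast
  have "((\<lambda>z. scaleC (\<phi> z) (F z v)) has_derivative
      (\<lambda>h. scaleC (\<phi> p) (scaleC h Dv) + scaleC (\<phi>' * h) (F p v))) (at p)"
    using bounded_bilinear.FDERIV[OF bbl_scaleC d\<phi>[unfolded has_field_derivative_def] dF]
    by (simp add: mult.commute)
  then have "((\<lambda>z. scaleC (\<phi> z) (F z v)) has_derivative
      (\<lambda>h. scaleC h (scaleC (\<phi> p) Dv + scaleC \<phi>' (F p v)))) (at p)"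
    by (rule has_derivative_eq_rhs) (simp add: fun_eq_iff scaleC_scaleC scaleC_add_right mult.commute)
  then have "(A has_derivative (\<lambda>h. scaleC h (scaleC (\<phi> p) Dv + scaleC \<phi>' (F p v)))) (at p)"
    by (rule has_derivative_transform_within_open[OF _ S]) (simp add: eq)
  then show ?thesis unfolding has_cderiv_def by blast
qed

lemma simple_zero_deriv:
  fixes f :: "complex \<Rightarrow> complex"
  assumes hol: "f holomorphic_on UNIV" and nz: "f w \<noteq> 0" and zo: "zorder f \<xi> = 1" and z: "f \<xi> = 0"
  shows "(f has_field_derivative (zor_poly f \<xi> \<xi>)) (at \<xi>)" "zor_poly f \<xi> \<xi> \<noteq> 0"
proof -
  define g where "g = zor_poly f \<xi>"
  obtain r where r: "r > 0" "g holomorphic_on cball \<xi> r"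
      "\<forall>w\<in>cball \<xi> r. f w = g w * (w - \<xi>) ^ nat (zorder f \<xi>) \<and> g w \<noteq> 0"
    using zorder_exist_zero[OF hol open_UNIV connected_UNIV UNIV_I, of \<xi>] nz unfolding g_def by auto
  then have eqf: "\<And>w. w \<in> ball \<xi> r \<Longrightarrow> g w * (w - \<xi>) = f w" using zo by auto
  have "g holomorphic_on ball \<xi> r" using r(2) by (rule holomorphic_on_subset) auto
  then obtain g' where g': "(g has_field_derivative g') (at \<xi>)"
    using holomorphic_on_imp_differentiable_at[of g "ball \<xi> r" \<xi>] r(1) field_differentiable_def by auto
  have "((\<lambda>w. w - \<xi>) has_field_derivative 1) (at \<xi>)" by (auto intro!: derivative_eq_intros)
  from DERIV_mult[OF g' this] have "((\<lambda>w. g w * (w - \<xi>)) has_field_derivative g \<xi>) (at \<xi>)" by simp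
  then have "(f has_field_derivative g \<xi>) (at \<xi>)"
    unfolding has_field_derivative_def
    by (rule has_derivative_transform_within_open[OF _ open_ball]) (use r(1) eqf in auto)
  then show "(f has_field_derivative (zor_poly f \<xi> \<xi>)) (at \<xi>)" by (simp add: g_def)
  show "zor_poly f \<xi> \<xi> \<noteq> 0" using r(1,3) by (auto simp: g_def)
qed

lemma nonzero_ball:
  fixes f :: "complex \<Rightarrow> complex"
  assumes "f holomorphic_on UNIV" "f p \<noteq> 0"
  shows "\<exists>r>0. \<forall>z\<in>ball p r. f z \<noteq> 0"
proof -
  have "continuous_on UNIV f" using assms(1) holomorphic_on_imp_continuous_on by blast
  then have "isCont f p" by (metis UNIV_I continuous_on_eq_continuous_at open_UNIV)
  then have "eventually (\<lambda>z. f z \<noteq> 0) (at p)"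
    using assms(2) unfolding isCont_def by (rule tendsto_imp_eventually_ne)
  then obtain r where "r > 0" "\<forall>z. z \<noteq> p \<and> dist z p < r \<longrightarrow> f z \<noteq> 0"
    unfolding eventually_at by auto
  then show ?thesis using assms(2) by (metis dist_commute mem_ball)
qed

lemma coef_id1:
  fixes s d q w :: complex
  assumes "s \<noteq> 0" "d \<noteq> 0" "q \<noteq> 0" "w \<noteq> 0"
  shows "s * d * (q / (w * d)) * (inverse q * inverse s * w) = 1"
  using assms by (simp add: field_simps)

lemma coef_id2:
  fixes c s d x l :: complex
  assumes "c \<noteq> 0" "s \<noteq> 0" "d \<noteq> 0"
  shows "c * x * l / (c / (s * d)) = x * (s * d * l)"
  using assms by (simp add: field_simps)

lemma coef_id3:
  fixes s q w :: complex
  assumes "s \<noteq> 0" "q \<noteq> 0" "w \<noteq> 0"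
  shows "inverse (s * (q / w)) = inverse q * inverse s * w"
  using assms by (simp add: field_simps)

lemma inv_diff_id:
  fixes A B :: complex
  shows "A \<noteq> 0 \<Longrightarrow> B \<noteq> 0 \<Longrightarrow> A * B * (inverse A - inverse B) = B - A"
  by (simp add: field_simps)

context setting begin

lemma F_add: "F z (x + y) = F z x + F z y"
  using eop_bl[OF eop] by (simp add: linear_simps)

lemma b_imp_a:
  assumes hb: "\<forall>\<beta>. \<forall>f \<in> Hzero (HF F) \<beta>. Rop \<beta> f \<in> HF F"
  shows "\<exists>(Q :: complex \<Rightarrow> complex) (A :: complex \<Rightarrow> 'x).
            Q holomorphic_on UNIV \<and> {z. Q z = 0} = range zs \<and> (\<forall>n. deriv Q (zs n) \<noteq> 0) \<and>
            entire_vec A \<and> (\<forall>z. A z \<noteq> 0) \<and> (\<forall>n. cinner (A (zs n)) (u n) \<noteq> 0) \<and>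
            (\<forall>f \<in> HF F. \<forall>z.
               (\<lambda>n. scaleC (cinner (f (zs n)) (u n) * lagr Q (zs n) z / cinner (A (zs n)) (u n)) (A z))
                 sums f z)"
proof -
  have getR: "\<exists>w. \<forall>z. z \<noteq> \<beta> \<longrightarrow> F z w = scaleC (inverse (z - \<beta>)) (F z v)" if "F \<beta> v = 0" for \<beta> v
  proof -
    have "(\<lambda>z. F z v) \<in> Hzero (HF F) \<beta>" using that by (auto simp: Hzero_def HF_def)
    with hb have "Rop \<beta> (\<lambda>z. F z v) \<in> HF F" by blast
    then obtain w where "Rop \<beta> (\<lambda>z. F z v) = (\<lambda>z. F z w)" by (auto simp: HF_def)
    then have "F z w = scaleC (inverse (z - \<beta>)) (F z v)" if "z \<noteq> \<beta>" for z
      using that by (metis Rop_def)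
    then show ?thesis by blast
  qed
  have coefR: "cinner w (u n) = cinner v (u n) / (zs n - \<beta>)"
    if "F z w = scaleC (inverse (z - \<beta>)) (F z v)" "z = zs n" "zs n \<noteq> \<beta>" for w v \<beta> n z
  proof -
    have "scaleC (c n * cinner w (u n)) (u n) = scaleC (inverse (zs n - \<beta>) * (c n * cinner v (u n))) (u n)"
      using that Fz by (simp add: scaleC_scaleC)
    then have "c n * cinner w (u n) = inverse (zs n - \<beta>) * (c n * cinner v (u n))"
      by (rule scaleC_cancel_right) (rule onb_nz[OF onb])
    then have "c n * cinner w (u n) = c n * (inverse (zs n - \<beta>) * cinner v (u n))"
      by (metis mult.left_commute)
    then have "cinner w (u n) = inverse (zs n - \<beta>) * cinner v (u n)"
      using cnz[rule_format, of n] mult_cancel_left by blast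
    then show ?thesis by (simp add: divide_inverse mult.commute)
  qed
  define G where "G n z = scaleC (z - zs n) (F z (u n))" for n z
  have Fcont: "isCont (\<lambda>z. F z x) p" for x p by (rule eop_cont[OF eop])
  have Fnn: "F (zs n) (u n) \<noteq> 0" for n using Fzu[of n n] cnz onb_nz[OF onb] by simp
  have Grel: "\<exists>\<sigma>. \<sigma> \<noteq> 0 \<and> (\<forall>z. G m z = scaleC \<sigma> (G k z))" if km: "k \<noteq> m" for k m
  proof -
    have "F (zs k) (u m) = 0" using Fzu km by simp
    then obtain w where w: "\<And>z. z \<noteq> zs k \<Longrightarrow> F z w = scaleC (inverse (z - zs k)) (F z (u m))"
      using getR by blast
    define t where "t = cinner w (u k)"
    have cw: "cinner w (u n) = (if n = m then inverse (zs m - zs k) else 0)" if "n \<noteq> k" for n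
    proof -
      have "zs n \<noteq> zs k" using that zs_inj by blast
      then have "cinner w (u n) = cinner (u m) (u n) / (zs n - zs k)"
        by (intro coefR[OF w[of "zs n"]]) auto
      then show ?thesis using onb_inner[OF onb, of m n] by (auto simp: divide_inverse)
    qed
    have weq: "w = scaleC (inverse (zs m - zs k)) (u m) + scaleC t (u k)"
    proof (rule onb_determ[OF onb])
      fix n
      show "cinner w (u n) = cinner (scaleC (inverse (zs m - zs k)) (u m) + scaleC t (u k)) (u n)"
        using cw[of n] km onb_inner[OF onb, of m n] onb_inner[OF onb, of k n]
        by (cases "n = k") (auto simp: cinner_add_left cinner_scaleC_left t_def)
    qed
    have rel: "scaleC (- t * (zs m - zs k)) (G k z) = G m z" for z
    proof (cases "z = zs k")
      case True then show ?thesis using Fzu km by (simp add: G_def)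
    next
      case False
      have "scaleC (inverse (zs m - zs k)) (F z (u m)) + scaleC t (F z (u k)) = scaleC (inverse (z - zs k)) (F z (u m))"
        using w[OF False] by (simp add: weq F_add eop_scaleC[OF eop])
      then have "scaleC t (F z (u k)) = scaleC (inverse (z - zs k) - inverse (zs m - zs k)) (F z (u m))"
        by (simp add: scaleC_diff_left algebra_simps)
      then have "scaleC ((z - zs k) * (zs m - zs k)) (scaleC t (F z (u k))) =
                 scaleC ((z - zs k) * (zs m - zs k) * (inverse (z - zs k) - inverse (zs m - zs k))) (F z (u m))"
        by (simp add: scaleC_scaleC)
      moreover have "(z - zs k) * (zs m - zs k) * (inverse (z - zs k) - inverse (zs m - zs k)) = zs m - z"
      proof -
        have "zs m \<noteq> zs k" using km zs_inj by metis
        then have "z - zs k \<noteq> 0" "zs m - zs k \<noteq> 0" using False by auto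
        then have "(z - zs k) * (zs m - zs k) * (inverse (z - zs k) - inverse (zs m - zs k)) = (zs m - zs k) - (z - zs k)"
          by (rule inv_diff_id)
        then show ?thesis by simp
      qed
      ultimately have "scaleC ((z - zs k) * (zs m - zs k) * t) (F z (u k)) = scaleC (zs m - z) (F z (u m))"
        by (simp add: scaleC_scaleC)
      then have "scaleC (- ((z - zs k) * (zs m - zs k) * t)) (F z (u k)) = scaleC (z - zs m) (F z (u m))"
        by (simp add: scaleC_minus_left scaleC_minus_right[symmetric] scaleC_diff_left algebra_simps)
      then show ?thesis by (simp add: G_def scaleC_scaleC algebra_simps)
    qed
    have "- t * (zs m - zs k) \<noteq> 0"
    proof
      assume h0: "- t * (zs m - zs k) = 0"
      have gm: "G m z = 0" for z
      proof -
        have "G m z = scaleC (- t * (zs m - zs k)) (G k z)" using rel[of z] by simp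
        then show ?thesis by (simp only: h0 scaleC_zero_left)
      qed
      have Fm0: "F z (u m) = 0" if "z \<noteq> zs m" for z using gm[of z] that by (simp add: G_def)
      have "F (zs m) (u m) = 0" by (rule vanish_pt[OF Fcont, where q = "zs m"]) (use Fm0 in auto)
      then show False using Fnn by simp
    qed
    then show ?thesis using rel by metis
  qed
  have "\<forall>m. \<exists>s. s \<noteq> 0 \<and> (\<forall>z. G m z = scaleC s (G 0 z))"
  proof
    fix m show "\<exists>s. s \<noteq> 0 \<and> (\<forall>z. G m z = scaleC s (G 0 z))"
    proof (cases "m = 0")
      case True then show ?thesis by (intro exI[of _ 1]) (simp add: scaleC_one)
    next
      case False then show ?thesis using Grel[of 0 m] by auto
    qed
  qed
  then obtain s where s: "\<And>m. s m \<noteq> 0" "\<And>m z. G m z = scaleC (s m) (G 0 z)" by metis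
  have G0nz: "G 0 p \<noteq> 0" if "p \<notin> range zs" for p
  proof
    assume G0: "G 0 p = 0"
    have "p \<noteq> zs 0" using that by auto
    then have "F p (u 0) = 0" using G0 by (simp add: G_def)
    then obtain w where w: "\<And>z. z \<noteq> p \<Longrightarrow> F z w = scaleC (inverse (z - p)) (F z (u 0))"
      using getR by blast
    have weq: "w = scaleC (inverse (zs 0 - p)) (u 0)"
    proof (rule onb_determ[OF onb])
      fix n
      have "zs n \<noteq> p" using that by auto
      then have "cinner w (u n) = cinner (u 0) (u n) / (zs n - p)"
        by (intro coefR[OF w[of "zs n"]]) auto
      then show "cinner w (u n) = cinner (scaleC (inverse (zs 0 - p)) (u 0)) (u n)"
        using onb_inner[OF onb, of 0 n] by (auto simp: cinner_scaleC_left divide_inverse)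
    qed
    have "F z (u 0) = 0" if "z \<noteq> zs 0" "z \<noteq> p" for z
    proof -
      have "scaleC (inverse (zs 0 - p)) (F z (u 0)) = scaleC (inverse (z - p)) (F z (u 0))"
        using w[OF that(2)] by (simp add: weq eop_scaleC[OF eop])
      moreover have "inverse (zs 0 - p) \<noteq> inverse (z - p)" using that by auto
      ultimately show ?thesis using scaleC_cancel_right by blast
    qed
    then have "F (zs 0) (u 0) = 0" by (rule vanish_pt[OF Fcont, where q = p]) (use \<open>\<And>z. z \<noteq> zs 0 \<Longrightarrow> z \<noteq> p \<Longrightarrow> F z (u 0) = 0\<close> in auto)
    then show False using Fnn by simp
  qed
  define p0 where "p0 z = cinner (F z (u 0)) (u 0)" for z
  have p0hol: "p0 holomorphic_on UNIV" unfolding p0_def by (rule eop_scalar_holo[OF eop])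
  have p0z: "p0 (zs n) = (if n = 0 then c 0 else 0)" for n
    using Fzu[of n 0] onb_inner[OF onb, of 0 0] by (auto simp: p0_def cinner_scaleC_left)
  have p0nc: "\<not> p0 constant_on UNIV"
    using p0z[of 0] p0z[of 1] cnz unfolding constant_on_def by (metis UNIV_I zero_neq_one)
  have fin: "finite (range zs \<inter> cball 0 R)" for R
  proof -
    have "finite {z\<in>cball 0 R. p0 z = 0}"
      by (rule holomorphic_compact_finite_zeros[OF p0hol open_UNIV connected_UNIV compact_cball _ p0nc]) auto
    moreover have "range zs \<inter> cball 0 R \<subseteq> insert (zs 0) {z\<in>cball 0 R. p0 z = 0}"
      using p0z by auto
    ultimately show ?thesis by (meson finite_insert finite_subset)
  qed
  have zs_inf: "filterlim zs at_infinity sequentially"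
    unfolding filterlim_at_infinity[OF order_refl]
  proof (intro allI impI)
    fix r :: real assume "r > 0"
    have "finite (zs -` (range zs \<inter> cball 0 r))"
      by (rule finite_vimageI[OF fin]) (use zs_inj in \<open>auto simp: inj_def\<close>)
    moreover have "{n. \<not> r \<le> norm (zs n)} \<subseteq> zs -` (range zs \<inter> cball 0 r)" by auto
    ultimately have "finite {n. \<not> r \<le> norm (zs n)}" by (rule finite_subset[rotated])
    then show "eventually (\<lambda>n. r \<le> norm (zs n)) sequentially"
      by (simp add: eventually_cofinite cofinite_eq_sequentially[symmetric])
  qed
  have "range zs \<noteq> UNIV"
  proof
    assume "range zs = UNIV"
    moreover have "countable (range zs)" by simp
    ultimately show False using uncountable_UNIV_complex by simp
  qed
  then obtain w0 where w0: "w0 \<notin> range zs" by auto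
  define a where "a n = zs n - w0" for n
  interpret W: weierstrass_product' a
  proof
    show "a n \<noteq> 0" for n using w0 by (auto simp: a_def)
    show "filterlim a at_infinity at_top" unfolding a_def
      using tendsto_add_filterlim_at_infinity[OF tendsto_const[of "- w0"] zs_inf]
      by (simp add: add.commute)
    show "finite (a -` {z})" if "z \<in> range a" for z
    proof -
      have "a -` {z} \<subseteq> {n. zs n = z + w0}" by (auto simp: a_def)
      moreover have "finite {n. zs n = z + w0}"
        using zs_inj by (metis (mono_tags, lifting) finite_nat_set_iff_bounded_le mem_Collect_eq order_refl)
      ultimately show ?thesis by (rule finite_subset)
    qed
  qed
  define Q where "Q z = W.f (z - w0)" for z
  have Qhol: "Q holomorphic_on UNIV" unfolding Q_def
    by (intro holomorphic_on_compose_gen[unfolded o_def, OF _ W.holomorphic]) (auto intro!: holomorphic_intros)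
  have Qz: "Q z = 0 \<longleftrightarrow> z \<in> range zs" for z
    unfolding Q_def W.zero by (auto simp: a_def image_iff)
  have dQ: "(Q has_field_derivative (zor_poly W.f (zs n - w0) (zs n - w0))) (at (zs n))"
    "zor_poly W.f (zs n - w0) (zs n - w0) \<noteq> 0" for n
  proof -
    have "W.f 0 \<noteq> 0" using W.zero W.a_nonzero by auto
    moreover have "zorder W.f (zs n - w0) = 1"
    proof -
      have "a -` {zs n - w0} = {n}" using zs_inj by (auto simp: a_def)
      then show ?thesis using W.zorder[of "zs n - w0"] by simp
    qed
    moreover have "W.f (zs n - w0) = 0" using W.zero by (auto simp: a_def)
    ultimately have d: "(W.f has_field_derivative (zor_poly W.f (zs n - w0) (zs n - w0))) (at (zs n - w0))"
      and nz: "zor_poly W.f (zs n - w0) (zs n - w0) \<noteq> 0"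
      using simple_zero_deriv[OF W.holomorphic] by blast+
    have "((\<lambda>z. W.f (z - w0)) has_field_derivative (zor_poly W.f (zs n - w0) (zs n - w0) * 1)) (at (zs n))"
      by (rule DERIV_chain2[where g = "\<lambda>z. z - w0" and x = "zs n", OF d[folded diff_conv_add_uminus, simplified]]) (auto intro!: derivative_eq_intros)
    then show "(Q has_field_derivative (zor_poly W.f (zs n - w0) (zs n - w0))) (at (zs n))"
      by (simp add: Q_def[abs_def])
    show "zor_poly W.f (zs n - w0) (zs n - w0) \<noteq> 0" by (rule nz)
  qed
  have dQnz: "deriv Q (zs n) \<noteq> 0" for n using dQ[of n] DERIV_imp_deriv by metis
  have injzs: "inj zs" using zs_inj by (auto intro: injI)
  define K where "K n = c n / (s n * deriv Q (zs n))" for n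
  define A where "A z = (if z \<in> range zs then scaleC (K (inv zs z)) (u (inv zs z))
                         else scaleC (inverse (Q z)) (G 0 z))" for z
  have A_zs: "A (zs n) = scaleC (K n) (u n)" for n by (simp add: A_def inv_f_f[OF injzs])
  have A_out: "A z = scaleC (inverse (Q z)) (G 0 z)" if "z \<notin> range zs" for z
    using that by (simp add: A_def)
  have Knz: "K n \<noteq> 0" for n using cnz s(1) dQnz by (simp add: K_def)
  have Anz: "\<forall>z. A z \<noteq> 0"
  proof
    fix z show "A z \<noteq> 0"
    proof (cases "z \<in> range zs")
      case True then obtain n where "z = zs n" by auto
      then show ?thesis using Knz onb_nz[OF onb] by (simp add: A_zs)
    next
      case False then show ?thesis using G0nz Qz by (simp add: A_out)
    qed
  qed
  have AK: "cinner (A (zs n)) (u n) = K n" for n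
    using onb_inner[OF onb, of n n] by (simp add: A_zs cinner_scaleC_left)
  have G0_from: "G 0 z = scaleC (inverse (s n) * (z - zs n)) (F z (u n))" for n z
  proof -
    have "scaleC (inverse (s n)) (G n z) = scaleC (inverse (s n) * s n) (G 0 z)"
      by (simp add: s(2)[of n z] scaleC_scaleC)
    then show ?thesis using s(1)[of n] by (simp add: scaleC_one G_def scaleC_scaleC)
  qed
  have Fn_rep: "F z (u n) = scaleC (s n * deriv Q (zs n) * lagr Q (zs n) z) (A z)" for z n
  proof (cases "z \<in> range zs")
    case True
    then obtain m where m: "z = zs m" by auto
    show ?thesis
    proof (cases "m = n")
      case True
      have "scaleC (s n * deriv Q (zs n) * lagr Q (zs n) z) (A z) = scaleC (s n * deriv Q (zs n) * K n) (u n)"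
        using True m by (simp add: lagr_def A_zs scaleC_scaleC)
      also have "s n * deriv Q (zs n) * K n = c n" using s(1)[of n] dQnz[of n] by (simp add: K_def)
      finally show ?thesis using True m Fzu by simp
    next
      case False
      have "lagr Q (zs n) z = 0" using m False Qz lagr_zs[of Q m n] by auto
      then show ?thesis using m False Fzu by simp
    qed
  next
    case False
    then have Qzn: "Q z \<noteq> 0" using Qz by simp
    have zn: "z - zs n \<noteq> 0" using False by auto
    have L: "lagr Q (zs n) z = Q z / ((z - zs n) * deriv Q (zs n))"
      by (rule lagr_nz[of Q, OF Qzn]) (use Qz in auto)
    have "scaleC (s n * deriv Q (zs n) * lagr Q (zs n) z) (A z)
        = scaleC (s n * deriv Q (zs n) * (Q z / ((z - zs n) * deriv Q (zs n))) * (inverse (Q z) * inverse (s n) * (z - zs n))) (F z (u n))"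
      unfolding L A_out[OF False] G0_from[of z n] by (simp add: scaleC_scaleC mult.assoc)
    also have "\<dots> = F z (u n)"
      using coef_id1[OF s(1)[of n] dQnz[of n] Qzn zn] by (simp add: scaleC_one)
    finally show ?thesis by simp
  qed
  have expn: "\<forall>f \<in> HF F. \<forall>z.
               (\<lambda>n. scaleC (cinner (f (zs n)) (u n) * lagr Q (zs n) z / cinner (A (zs n)) (u n)) (A z))
                 sums f z"
  proof (intro ballI allI)
    fix f z assume "f \<in> HF F"
    then obtain v where fv: "f = (\<lambda>z. F z v)" by (auto simp: HF_def)
    have "scaleC (cinner (f (zs n)) (u n) * lagr Q (zs n) z / cinner (A (zs n)) (u n)) (A z)
          = scaleC (cinner v (u n)) (F z (u n))" for n
    proof -
      have "cinner (f (zs n)) (u n) * lagr Q (zs n) z / cinner (A (zs n)) (u n)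
            = cinner v (u n) * (s n * deriv Q (zs n) * lagr Q (zs n) z)"
        unfolding fv sample AK K_def
        by (rule coef_id2) (use cnz s(1) dQnz in auto)
      then show ?thesis by (simp add: Fn_rep[of z n] scaleC_scaleC)
    qed
    then show "(\<lambda>n. scaleC (cinner (f (zs n)) (u n) * lagr Q (zs n) z / cinner (A (zs n)) (u n)) (A z)) sums f z"
      using eop_sums[OF eop onb, of v z] by (simp add: fv)
  qed
  have entA: "entire_vec A"
    unfolding entire_vec_def
  proof
    fix p
    show "\<exists>D. has_cderiv A D p"
    proof (cases "p \<in> range zs")
      case True
      then obtain n where pn: "p = zs n" by auto
      define Q1 where "Q1 z = (if z = zs n then deriv Q (zs n) else (Q z - Q (zs n)) / (z - zs n))" for z
      have Q1hol: "Q1 holomorphic_on UNIV" unfolding Q1_def[abs_def]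
        by (rule pole_lemma[OF Qhol]) simp
      have "Q1 (zs n) \<noteq> 0" using dQnz by (simp add: Q1_def)
      then obtain \<rho> where \<rho>: "\<rho> > 0" "\<forall>z\<in>ball (zs n) \<rho>. Q1 z \<noteq> 0"
        using nonzero_ball[OF Q1hol] by blast
      show ?thesis
      proof (rule loc_deriv[OF eop open_ball, of p "zs n" \<rho> "\<lambda>z. inverse (s n * Q1 z)"])
        show "p \<in> ball (zs n) \<rho>" using pn \<rho> by simp
        show "(\<lambda>z. inverse (s n * Q1 z)) holomorphic_on ball (zs n) \<rho>"
          using \<rho>(2) s(1)[of n]
          by (intro holomorphic_intros holomorphic_on_subset[OF Q1hol]) auto
        fix z assume z: "z \<in> ball (zs n) \<rho>"
        show "A z = scaleC (inverse (s n * Q1 z)) (F z (u n))"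
        proof (cases "z = zs n")
          case True
          have "scaleC (inverse (s n * Q1 z)) (F z (u n)) = scaleC (inverse (s n * deriv Q (zs n)) * c n) (u n)"
            using True by (simp add: Q1_def Fzu scaleC_scaleC)
          also have "inverse (s n * deriv Q (zs n)) * c n = K n" by (simp add: K_def divide_inverse mult.commute)
          finally show ?thesis using True by (simp add: A_zs)
        next
          case False
          have Q1z: "Q1 z = Q z / (z - zs n)" using False Qz by (simp add: Q1_def)
          have "Q1 z \<noteq> 0" using \<rho>(2) z by blast
          then have "Q z \<noteq> 0" by (simp add: Q1z)
          then have zo: "z \<notin> range zs" using Qz by simp
          have zn: "z - zs n \<noteq> 0" using False by simp
          show ?thesis
            unfolding A_out[OF zo] G0_from[of z n] Q1z coef_id3[OF s(1)[of n] \<open>Q z \<noteq> 0\<close> zn]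
            by (simp add: scaleC_scaleC mult.assoc)
        qed
      qed
    next
      case False
      then have "Q p \<noteq> 0" using Qz by simp
      then obtain \<rho> where \<rho>: "\<rho> > 0" "\<forall>z\<in>ball p \<rho>. Q z \<noteq> 0"
        using nonzero_ball[OF Qhol] by blast
      show ?thesis
      proof (rule loc_deriv[OF eop open_ball, of p p \<rho> "\<lambda>z. inverse (Q z) * (z - zs 0)"])
        show "p \<in> ball p \<rho>" using \<rho> by simp
        show "(\<lambda>z. inverse (Q z) * (z - zs 0)) holomorphic_on ball p \<rho>"
          using \<rho>(2) by (intro holomorphic_intros holomorphic_on_subset[OF Qhol]) auto
        fix z assume z: "z \<in> ball p \<rho>"
        then have zo: "z \<notin> range zs" using \<rho>(2) Qz by auto
        show "A z = scaleC (inverse (Q z) * (z - zs 0)) (F z (u 0))"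
          by (simp add: A_out[OF zo] G_def scaleC_scaleC)
      qed
    qed
  qed
  show ?thesis
    apply (rule exI[of _ Q], rule exI[of _ A])
    using Qhol Qz dQnz entA Anz AK Knz expn by auto
qed

end


theorem theorem4p1:
  fixes F :: "complex \<Rightarrow> 'x::chilbert_space \<Rightarrow> 'x"
    and u :: "nat \<Rightarrow> 'x" and zs :: "nat \<Rightarrow> complex" and c :: "nat \<Rightarrow> complex"
  assumes "entire_op F"
    and "orthonormal_basis u"
    and "\<forall>n. c n \<noteq> 0"
    and "\<forall>n v. F (zs n) v = scaleC (c n * cinner v (u n)) (u n)"
  shows "(\<exists>(Q :: complex \<Rightarrow> complex) (A :: complex \<Rightarrow> 'x).
            Q holomorphic_on UNIV \<and> {z. Q z = 0} = range zs \<and> (\<forall>n. deriv Q (zs n) \<noteq> 0) \<and>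
            entire_vec A \<and> (\<forall>z. A z \<noteq> 0) \<and> (\<forall>n. cinner (A (zs n)) (u n) \<noteq> 0) \<and>
            (\<forall>f \<in> HF F. \<forall>z.
               (\<lambda>n. scaleC (cinner (f (zs n)) (u n) * lagr Q (zs n) z / cinner (A (zs n)) (u n)) (A z))
                 sums f z))
     \<longleftrightarrow> (\<forall>\<beta>. \<forall>f \<in> Hzero (HF F) \<beta>. Rop \<beta> f \<in> HF F)"
proof -
  interpret setting F u zs c using assms by unfold_locales
  show ?thesis
  proof
    assume "\<exists>(Q :: complex \<Rightarrow> complex) (A :: complex \<Rightarrow> 'x).
            Q holomorphic_on UNIV \<and> {z. Q z = 0} = range zs \<and> (\<forall>n. deriv Q (zs n) \<noteq> 0) \<and>
            entire_vec A \<and> (\<forall>z. A z \<noteq> 0) \<and> (\<forall>n. cinner (A (zs n)) (u n) \<noteq> 0) \<and>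
            (\<forall>f \<in> HF F. \<forall>z.
               (\<lambda>n. scaleC (cinner (f (zs n)) (u n) * lagr Q (zs n) z / cinner (A (zs n)) (u n)) (A z))
                 sums f z)"
    then obtain Q :: "complex \<Rightarrow> complex" and A :: "complex \<Rightarrow> 'x" where
      h: "Q holomorphic_on UNIV" "{z. Q z = 0} = range zs" "\<forall>n. deriv Q (zs n) \<noteq> 0"
         "\<forall>z. A z \<noteq> 0" "\<forall>n. cinner (A (zs n)) (u n) \<noteq> 0"
         "\<forall>f \<in> HF F. \<forall>z.
               (\<lambda>n. scaleC (cinner (f (zs n)) (u n) * lagr Q (zs n) z / cinner (A (zs n)) (u n)) (A z))
                 sums f z"
      by blast
    show "\<forall>\<beta>. \<forall>f \<in> Hzero (HF F) \<beta>. Rop \<beta> f \<in> HF F"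
      by (rule a_imp_b[OF h])
  next
    assume "\<forall>\<beta>. \<forall>f \<in> Hzero (HF F) \<beta>. Rop \<beta> f \<in> HF F"
    then show "\<exists>(Q :: complex \<Rightarrow> complex) (A :: complex \<Rightarrow> 'x).
            Q holomorphic_on UNIV \<and> {z. Q z = 0} = range zs \<and> (\<forall>n. deriv Q (zs n) \<noteq> 0) \<and>
            entire_vec A \<and> (\<forall>z. A z \<noteq> 0) \<and> (\<forall>n. cinner (A (zs n)) (u n) \<noteq> 0) \<and>
            (\<forall>f \<in> HF F. \<forall>z.
               (\<lambda>n. scaleC (cinner (f (zs n)) (u n) * lagr Q (zs n) z / cinner (A (zs n)) (u n)) (A z))
                 sums f z)"
      by (rule b_imp_a)
  qed
qed

end
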